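(* If $s>0$ is small enough, then for every $1\le i\le n-1$ and $1\le j\le D_i$ there is a critical point $w_{i,j}\in\mathbb{C}\setminus\{0\}$ of $P_n$ (a solution of $\sum_{k=1}^{n-1}\frac{(-1)^{k-1}D_kz^{D_k}}{z^{D_k}-a_k^{D_k}}+(-1)^{n-1}d_n-\frac{(d_1-1)d_1z^{d_1}}{(d_1-1)z^{d_1}+1}=0$) such that $|w_{i,j}-\widetilde w_{i,j}|<s^{1/2}|a_i|$, where $\widetilde w_{i,j}=r_ia_ie^{\pi\mathrm{i}(2j-1)/D_i}$ and $r_i=(d_{i+1}/d_i)^{1/D_i}$.
   Context: $n\ge2$, $d_1,\dots,d_n$ positive integers with $\sum 1/d_i<1$, $d_{\max}=\max_i d_i$, $D_i=d_i+d_{i+1}$. $s>0$, $a_i\in\mathbb{C}$ with $|a_1|=(d_{\max}^2s)^{1/d_1}$, $|a_i|=s^{1/d_i}|a_{i-1}|$. $C_n=\sum_{i=1}^{n-1}\frac{(-1)^{i-1}D_ia_i^{D_i}}{1-a_i^{D_i}}$, $B_n=C_n/(1+C_n)$, $A_n=\frac{1}{1+C_n}\prod_{i=1}^{n-1}(1-a_i^{D_i})^{(-1)^i}$, $P_n(z)=A_n\frac{d_1z^{(-1)^{n-1}d_n}}{(d_1-1)z^{d_1}+1}\prod_{i=1}^{n-1}(z^{D_i}-a_i^{D_i})^{(-1)^{i-1}}+B_n$. *)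

theory Defs
  imports "HOL-Analysis.Analysis"
begin

text \<open>Degrees d i for i in {1..n}, parameters a i (complex), indices starting at 1.\<close>

definition DD :: "(nat \<Rightarrow> nat) \<Rightarrow> nat \<Rightarrow> nat" where
  "DD d i = d i + d (Suc i)"

definition Cn :: "nat \<Rightarrow> (nat \<Rightarrow> nat) \<Rightarrow> (nat \<Rightarrow> complex) \<Rightarrow> complex" where
  "Cn n d a = (\<Sum>i=1..n-1. (-1)^(i-1) * of_nat (DD d i) * a i ^ DD d i / (1 - a i ^ DD d i))"

definition Bn :: "nat \<Rightarrow> (nat \<Rightarrow> nat) \<Rightarrow> (nat \<Rightarrow> complex) \<Rightarrow> complex" where
  "Bn n d a = Cn n d a / (1 + Cn n d a)"

definition An :: "nat \<Rightarrow> (nat \<Rightarrow> nat) \<Rightarrow> (nat \<Rightarrow> complex) \<Rightarrow> complex" where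
  "An n d a = (1 / (1 + Cn n d a)) * (\<Prod>i=1..n-1. (1 - a i ^ DD d i) powi ((-1::int)^i))"

definition Pn :: "nat \<Rightarrow> (nat \<Rightarrow> nat) \<Rightarrow> (nat \<Rightarrow> complex) \<Rightarrow> complex \<Rightarrow> complex" where
  "Pn n d a z = An n d a * (of_nat (d 1) * z powi ((-1::int)^(n-1) * int (d n))
       / ((of_nat (d 1) - 1) * z ^ d 1 + 1))
     * (\<Prod>i=1..n-1. (z ^ DD d i - a i ^ DD d i) powi ((-1::int)^(i-1))) + Bn n d a"

text \<open>The explicit critical point equation (logarithmic derivative of P_n).\<close>
definition crit_eq :: "nat \<Rightarrow> (nat \<Rightarrow> nat) \<Rightarrow> (nat \<Rightarrow> complex) \<Rightarrow> complex \<Rightarrow> bool" where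
  "crit_eq n d a z \<longleftrightarrow>
     (\<Sum>k=1..n-1. (-1)^(k-1) * of_nat (DD d k) * z ^ DD d k / (z ^ DD d k - a k ^ DD d k))
     + (-1)^(n-1) * of_nat (d n)
     - (of_nat (d 1) - 1) * of_nat (d 1) * z ^ d 1 / ((of_nat (d 1) - 1) * z ^ d 1 + 1) = 0"

end

theory Submission
  imports Defs
begin


lemma Q_deriv:
  fixes w c :: complex and e :: int and m :: nat
  assumes "w \<noteq> 0" "c * w ^ m + 1 \<noteq> 0" "m \<ge> 1"
  shows "((\<lambda>z. K * z powi e / (c * z ^ m + 1)) has_field_derivative
     (K * w powi e / (c * w ^ m + 1)) * (of_int e / w - c * of_nat m * w ^ m / (w * (c * w ^ m + 1)))) (at w)"
proof -
  have "((\<lambda>z. K * z powi e / (c * z ^ m + 1)) has_field_derivative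
     ((K * (of_int e * w powi (e - 1) * 1)) * (c * w ^ m + 1) - K * w powi e * (c * (of_nat m * w ^ (m - 1) * 1) + 0)) / (c * w ^ m + 1)^2) (at w)"
    using assms by (auto intro!: derivative_eq_intros simp: power2_eq_square)
  moreover have "((K * (of_int e * w powi (e - 1) * 1)) * (c * w ^ m + 1) - K * w powi e * (c * (of_nat m * w ^ (m - 1) * 1) + 0)) / (c * w ^ m + 1)^2
     = (K * w powi e / (c * w ^ m + 1)) * (of_int e / w - c * of_nat m * w ^ m / (w * (c * w ^ m + 1)))"
  proof -
    have e1: "w powi (e - 1) = w powi e / w" using assms by (simp add: power_int_diff)
    have e2: "w ^ (m - 1) = w ^ m / w" using assms by (simp add: power_diff)
    have ne: "1 + c * w ^ m \<noteq> 0" using assms by (simp add: add.commute)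
    show ?thesis unfolding e1 e2 using assms ne by (simp add: divide_simps power2_eq_square) algebra
  qed
  ultimately show ?thesis by simp
qed

lemma powi_pm1_ratio:
  fixes x y :: complex
  assumes "x \<noteq> 0"
  shows "of_int s * x powi (s - 1) * y / x powi s = of_int s * y / x"
  using assms by (simp add: power_int_diff field_simps)

lemma prod_deriv:
  fixes w :: complex and D :: "nat \<Rightarrow> nat" and \<alpha> :: "nat \<Rightarrow> complex" and \<sigma> :: "nat \<Rightarrow> int"
  assumes "\<And>k. k \<in> A \<Longrightarrow> w ^ D k - \<alpha> k \<noteq> 0"
  shows "((\<lambda>z. \<Prod>k\<in>A. (z ^ D k - \<alpha> k) powi \<sigma> k) has_field_derivative
     (\<Prod>k\<in>A. (w ^ D k - \<alpha> k) powi \<sigma> k) * (\<Sum>k\<in>A. of_int (\<sigma> k) * (of_nat (D k) * w ^ (D k - 1)) / (w ^ D k - \<alpha> k))) (at w)"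
proof -
  have "((\<lambda>z. \<Prod>k\<in>A. (\<lambda>k z. (z ^ D k - \<alpha> k) powi \<sigma> k) k z) has_field_derivative
     (\<Prod>k\<in>A. (w ^ D k - \<alpha> k) powi \<sigma> k) * (\<Sum>k\<in>A. (of_int (\<sigma> k) * (w ^ D k - \<alpha> k) powi (\<sigma> k - 1) * (of_nat (D k) * w ^ (D k - 1) * 1 - 0)) / (w ^ D k - \<alpha> k) powi \<sigma> k)) (at w)"
    by (rule has_field_derivative_prod') (use assms in \<open>auto intro!: derivative_eq_intros\<close>)
  moreover have "(\<Sum>k\<in>A. (of_int (\<sigma> k) * (w ^ D k - \<alpha> k) powi (\<sigma> k - 1) * (of_nat (D k) * w ^ (D k - 1) * 1 - 0)) / (w ^ D k - \<alpha> k) powi \<sigma> k)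
     = (\<Sum>k\<in>A. of_int (\<sigma> k) * (of_nat (D k) * w ^ (D k - 1)) / (w ^ D k - \<alpha> k))"
    by (rule sum.cong) (use assms powi_pm1_ratio in auto)
  ultimately show ?thesis by simp
qed

definition crit_lhs :: "nat \<Rightarrow> (nat \<Rightarrow> nat) \<Rightarrow> (nat \<Rightarrow> complex) \<Rightarrow> complex \<Rightarrow> complex" where
  "crit_lhs n d a z =
     (\<Sum>k=1..n-1. (-1)^(k-1) * of_nat (DD d k) * z ^ DD d k / (z ^ DD d k - a k ^ DD d k))
     + (-1)^(n-1) * of_nat (d n)
     - (of_nat (d 1) - 1) * of_nat (d 1) * z ^ d 1 / ((of_nat (d 1) - 1) * z ^ d 1 + 1)"

lemma deriv_Pn:
  assumes dpos: "\<And>i. i \<in> {1..n} \<Longrightarrow> d i > 0" and n: "n \<ge> 2"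
    and w0: "w \<noteq> 0" and wk: "\<forall>k\<in>{1..n-1}. w ^ DD d k \<noteq> a k ^ DD d k"
    and w1: "(of_nat (d 1) - 1) * w ^ d 1 + 1 \<noteq> 0"
    and ce: "crit_eq n d a w"
  shows "deriv (Pn n d a) w = 0"
proof -
  define c :: complex where "c = of_nat (d 1) - 1"
  define e :: int where "e = (-1::int)^(n-1) * int (d n)"
  define Q where "Q = (\<lambda>z::complex. of_nat (d 1) * z powi e / (c * z ^ d 1 + 1))"
  define Pr where "Pr = (\<lambda>z::complex. \<Prod>k\<in>{1..n-1}. (z ^ DD d k - a k ^ DD d k) powi ((-1::int)^(k-1)))"
  define S where "S = (\<Sum>k\<in>{1..n-1}. of_int ((-1::int)^(k-1)) * (of_nat (DD d k) * w ^ (DD d k - 1)) / (w ^ DD d k - a k ^ DD d k))"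
  have d1: "d 1 \<ge> 1" using dpos[of 1] n by auto
  have P: "Pn n d a = (\<lambda>z. An n d a * (Q z * Pr z) + Bn n d a)"
    by (rule ext) (simp add: Pn_def Q_def Pr_def c_def e_def mult.assoc)
  have dQ: "(Q has_field_derivative Q w * (of_int e / w - c * of_nat (d 1) * w ^ d 1 / (w * (c * w ^ d 1 + 1)))) (at w)"
    unfolding Q_def by (rule Q_deriv) (use w0 w1 d1 c_def in auto)
  have dP: "(Pr has_field_derivative Pr w * S) (at w)"
    unfolding Pr_def S_def by (rule prod_deriv) (use wk in auto)
  have dPn: "(Pn n d a has_field_derivative An n d a * (Q w * (Pr w * S) + (Q w * (of_int e / w - c * of_nat (d 1) * w ^ d 1 / (w * (c * w ^ d 1 + 1)))) * Pr w) + 0) (at w)"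
    unfolding P by (rule derivative_eq_intros refl dQ dP)+ (simp add: algebra_simps)
  have "w * (S + (of_int e / w - c * of_nat (d 1) * w ^ d 1 / (w * (c * w ^ d 1 + 1)))) = crit_lhs n d a w"
  proof -
    have "w * S = (\<Sum>k=1..n-1. (-1)^(k-1) * of_nat (DD d k) * w ^ DD d k / (w ^ DD d k - a k ^ DD d k))"
      unfolding S_def sum_distrib_left
    proof (rule sum.cong)
      fix k assume k: "k \<in> {1..n-1}"
      have "k \<le> n" using k by auto
      then have "DD d k \<ge> 1" using dpos[of k] k unfolding DD_def by auto
      then have "w * w ^ (DD d k - 1) = w ^ DD d k"
        by (metis power_eq_if One_nat_def Suc_leD not_one_le_zero)
      then show "w * (of_int ((-1::int)^(k-1)) * (of_nat (DD d k) * w ^ (DD d k - 1)) / (w ^ DD d k - a k ^ DD d k))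
          = (-1)^(k-1) * of_nat (DD d k) * w ^ DD d k / (w ^ DD d k - a k ^ DD d k)"
        by (simp add: field_simps)
    qed simp
    moreover have "w * (of_int e / w) = (-1)^(n-1) * of_nat (d n)" using w0 by (simp add: e_def)
    moreover have "w * (c * of_nat (d 1) * w ^ d 1 / (w * (c * w ^ d 1 + 1))) = (of_nat (d 1) - 1) * of_nat (d 1) * w ^ d 1 / ((of_nat (d 1) - 1) * w ^ d 1 + 1)"
      using w0 by (simp add: c_def)
    ultimately show ?thesis unfolding crit_lhs_def by (simp add: distrib_left right_diff_distrib)
  qed
  moreover have "crit_lhs n d a w = 0" using ce unfolding crit_eq_def crit_lhs_def .
  ultimately have SL: "S + (of_int e / w - c * of_nat (d 1) * w ^ d 1 / (w * (c * w ^ d 1 + 1))) = 0"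
    using w0 by simp
  have "An n d a * (Q w * (Pr w * S) + (Q w * (of_int e / w - c * of_nat (d 1) * w ^ d 1 / (w * (c * w ^ d 1 + 1)))) * Pr w) + 0
     = An n d a * Q w * Pr w * (S + (of_int e / w - c * of_nat (d 1) * w ^ d 1 / (w * (c * w ^ d 1 + 1))))"
    by (simp add: algebra_simps)
  also have "\<dots> = 0" using SL by simp
  finally have X0: "An n d a * (Q w * (Pr w * S) + (Q w * (of_int e / w - c * of_nat (d 1) * w ^ d 1 / (w * (c * w ^ d 1 + 1)))) * Pr w) + 0 = 0" .
  have "(Pn n d a has_field_derivative 0) (at w)"
    using dPn unfolding X0 .
  then show ?thesis by (rule DERIV_imp_deriv)
qed



lemma norm_exp_minus_one:
  fixes x :: complex
  assumes "cmod x \<le> 1"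
  shows "cmod (exp x - 1) \<le> 2 * cmod x"
proof -
  let ?f = "\<lambda>n. inverse (fact (n + 1)) *\<^sub>R (x ^ (n + 1))"
  let ?g = "\<lambda>n. inverse (fact (n + 1)) *\<^sub>R (cmod x ^ (n + 1))"
  have e1: "exp x - 1 = suminf ?f" using exp_first_terms[of x 1] by simp
  have e2: "exp (cmod x) - 1 = suminf ?g" using exp_first_terms[of "cmod x" 1] by simp
  have ng: "(\<lambda>n. norm (?f n)) = ?g" by (rule ext) (simp add: norm_power norm_mult)
  have sg: "summable ?g"
  proof -
    have "summable (\<lambda>n. inverse (fact (n+1)) * cmod x ^ (n+1))"
      by (rule summable_ignore_initial_segment[OF summable_exp[of "cmod x"]])
    then show ?thesis by simp
  qed
  have "cmod (exp x - 1) \<le> suminf ?g" unfolding e1 using summable_norm[of ?f] sg ng by simp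
  also have "\<dots> = exp (cmod x) - 1" using e2 by simp
  also have "\<dots> \<le> cmod x + (cmod x)^2" using exp_bound[of "cmod x"] assms by simp
  also have "\<dots> \<le> 2 * cmod x" using assms by (simp add: power2_eq_square mult_left_le)
  finally show ?thesis .
qed

lemma frac_bound:
  fixes u :: complex
  assumes "cmod u \<le> q" "q \<le> 1/2"
  shows "1 - u \<noteq> 0" "cmod (u / (1 - u)) \<le> 2 * q"
proof -
  have "cmod (1 - u) \<ge> 1 - cmod u" using norm_triangle_ineq2[of 1 u] by simp
  then have h: "cmod (1 - u) \<ge> 1/2" using assms by simp
  then show "1 - u \<noteq> 0" by auto
  have "cmod (u / (1 - u)) = cmod u / cmod (1 - u)" by (simp add: norm_divide)
  also have "\<dots> \<le> q / (1/2)"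
  proof -
    have q0: "0 \<le> q" using assms(1) norm_ge_zero[of u] by linarith
    show ?thesis using assms h q0 by (intro frac_le) auto
  qed
  finally show "cmod (u / (1 - u)) \<le> 2 * q" by simp
qed

lemma root_bound:
  fixes h :: complex and D :: nat
  assumes "cmod h < 1/2" "D \<ge> 1"
  shows "cmod (exp (Ln (1 + h) / of_nat D) - 1) \<le> 4 * cmod h"
    and "exp (Ln (1 + h) / of_nat D) ^ D = 1 + h"
proof -
  have L: "cmod (Ln (1 + h)) \<le> 2 * cmod h" using norm_Ln_le assms by auto
  have "cmod (Ln (1 + h) / of_nat D) \<le> cmod (Ln (1 + h))"
    using assms by (simp add: norm_divide divide_le_eq mult_le_cancel_left1)
  then have L2: "cmod (Ln (1 + h) / of_nat D) \<le> 2 * cmod h" using L by linarith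
  have "cmod (exp (Ln (1 + h) / of_nat D) - 1) \<le> 2 * cmod (Ln (1 + h) / of_nat D)"
    by (rule norm_exp_minus_one) (use L2 assms in auto)
  then show "cmod (exp (Ln (1 + h) / of_nat D) - 1) \<le> 4 * cmod h" using L2 by linarith
  have ne: "1 + h \<noteq> 0"
  proof
    assume "1 + h = 0" then have "h = -1" by (simp add: add_eq_0_iff)
    then show False using assms by simp
  qed
  have "exp (Ln (1 + h) / of_nat D) ^ D = exp (of_nat D * (Ln (1 + h) / of_nat D))"
    by (rule exp_of_nat_mult[symmetric])
  also have "of_nat D * (Ln (1 + h) / of_nat D) = Ln (1 + h)" using assms by simp
  also have "exp (Ln (1 + h)) = 1 + h" using ne by simp
  finally show "exp (Ln (1 + h) / of_nat D) ^ D = 1 + h" .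
qed

lemma pow_ratio_bound:
  fixes x B s :: real and p D :: nat
  assumes "0 \<le> x" "x \<le> B * s powr (1 / real p)" "1 \<le> B" "0 < p" "p \<le> D" "0 < s" "s < 1"
  shows "x ^ D \<le> B ^ D * s"
proof -
  have "x ^ D \<le> (B * s powr (1 / real p)) ^ D" using assms by (intro power_mono) auto
  also have "\<dots> = B ^ D * (s powr (1 / real p)) ^ D" by (simp add: power_mult_distrib)
  also have "(s powr (1 / real p)) ^ D = s powr (real D / real p)"
    using assms by (simp add: powr_realpow[symmetric] powr_powr)
  also have "s powr (real D / real p) \<le> s powr 1"
    using assms by (intro powr_mono') (auto simp: field_simps)
  finally show ?thesis using assms by (simp add: mult_left_mono)
qed



lemma moduli:
  fixes a :: "nat \<Rightarrow> complex"
  assumes s: "0 < s" "s < 1" and dpos: "\<And>i. i \<in> {1..n} \<Longrightarrow> d i > 0" and X: "X > 0"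
    and h1: "cmod (a 1) = (X * s) powr (1 / real (d 1))"
    and h2: "\<forall>i\<in>{2..n}. cmod (a i) = s powr (1 / real (d i)) * cmod (a (i - 1))"
    and n: "n \<ge> 1"
  shows "\<And>k. k \<in> {1..n} \<Longrightarrow> cmod (a k) > 0"
    and "\<And>l m. 1 \<le> l \<Longrightarrow> l \<le> m \<Longrightarrow> m \<le> n \<Longrightarrow> cmod (a m) \<le> cmod (a l)"
    and "\<And>k m. 1 \<le> k \<Longrightarrow> k < m \<Longrightarrow> m \<le> n \<Longrightarrow> cmod (a m) \<le> s powr (1 / real (d (Suc k))) * cmod (a k)"
    and "cmod (a 1) ^ d 1 = X * s"
proof -
  have stepeq: "cmod (a (Suc m)) = s powr (1 / real (d (Suc m))) * cmod (a m)" if "1 \<le> m" "Suc m \<le> n" for m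
    using h2 that by auto
  have sp1: "s powr (1 / real (d k)) \<le> 1" for k
    using s by (simp add: powr_le_one_le powr_le1)
  show pos: "cmod (a k) > 0" if "k \<in> {1..n}" for k
    using that
  proof (induction k)
    case 0 then show ?case by simp
  next
    case (Suc m)
    show ?case
    proof (cases "m = 0")
      case True then show ?thesis using h1 X s by simp
    next
      case False
      then have "cmod (a m) > 0" using Suc by auto
      then show ?thesis using stepeq[of m] Suc False s by simp
    qed
  qed
  show dec: "cmod (a m) \<le> cmod (a l)" if "1 \<le> l" "l \<le> m" "m \<le> n" for l m
    using that
  proof (induction m)
    case 0 then show ?case by simp
  next
    case (Suc m)
    show ?case
    proof (cases "l = Suc m")
      case True then show ?thesis by simp
    next
      case False
      then have IH: "cmod (a m) \<le> cmod (a l)" using Suc by auto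
      have "cmod (a (Suc m)) = s powr (1 / real (d (Suc m))) * cmod (a m)"
        using stepeq[of m] Suc False by auto
      also have "\<dots> \<le> 1 * cmod (a m)" by (intro mult_right_mono sp1) auto
      finally show ?thesis using IH by simp
    qed
  qed
  show "cmod (a m) \<le> s powr (1 / real (d (Suc k))) * cmod (a k)" if "1 \<le> k" "k < m" "m \<le> n" for k m
  proof -
    have "cmod (a m) \<le> cmod (a (Suc k))" using dec[of "Suc k" m] that by auto
    also have "\<dots> = s powr (1 / real (d (Suc k))) * cmod (a k)" using stepeq[of k] that by auto
    finally show ?thesis .
  qed
  have "d 1 > 0" using dpos n by auto
  then show "cmod (a 1) ^ d 1 = X * s"
    unfolding h1 using X s by (simp add: powr_realpow[symmetric] powr_powr)
qed

lemma telescope: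
  fixes d :: "nat \<Rightarrow> nat"
  assumes "i \<le> m"
  shows "(\<Sum>k\<in>{Suc i..m}. (-1::complex)^(k-1) * of_nat (DD d k)) = (-1)^i * of_nat (d (Suc i)) - (-1)^m * of_nat (d (Suc m))"
  using assms
proof (induction m)
  case 0 then show ?case by simp
next
  case (Suc m)
  show ?case
  proof (cases "i = Suc m")
    case True then show ?thesis by simp
  next
    case False
    then have "i \<le> m" using Suc by auto
    then have "(\<Sum>k\<in>{Suc i..Suc m}. (-1::complex)^(k-1) * of_nat (DD d k)) = 
       (\<Sum>k\<in>{Suc i..m}. (-1::complex)^(k-1) * of_nat (DD d k)) + (-1)^m * of_nat (DD d (Suc m))"
      by (simp add: sum.atLeast_Suc_atMost_Suc_shift sum.cl_ivl_Suc)
    also have "\<dots> = (-1)^i * of_nat (d (Suc i)) - (-1)^(Suc m) * of_nat (d (Suc (Suc m)))"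
      using Suc.IH \<open>i \<le> m\<close> by (simp add: DD_def algebra_simps)
    finally show ?thesis .
  qed
qed



lemma core:
  fixes n :: nat and d :: "nat \<Rightarrow> nat" and a :: "nat \<Rightarrow> complex" and s :: real
  defines "M \<equiv> Max (d ` {1..n})"
  defines "K \<equiv> (2 * real M + 2) ^ (2 * M)"
  defines "C \<equiv> 8 * real n * real M ^ 4 * K ^ 2"
  assumes n: "n \<ge> 2" and dpos: "\<And>i. i \<in> {1..n} \<Longrightarrow> d i > 0"
    and s: "0 < s" "s < 1 / (12 * real M * C)^2"
    and h1: "cmod (a 1) = (real (Max (d ` {1..n}))^2 * s) powr (1 / real (d 1))"
    and h2: "\<forall>i\<in>{2..n}. cmod (a i) = s powr (1 / real (d i)) * cmod (a (i - 1))"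
    and i: "i \<in> {1..n-1}" and j: "j \<in> {1..DD d i}"
  shows "\<exists>w. w \<noteq> 0
               \<and> (\<forall>k\<in>{1..n-1}. w ^ DD d k \<noteq> a k ^ DD d k)
               \<and> (of_nat (d 1) - 1) * w ^ d 1 + 1 \<noteq> 0
               \<and> crit_lhs n d a w = 0
               \<and> cmod (w - complex_of_real ((real (d (Suc i)) / real (d i)) powr (1 / real (DD d i)))
                          * a i * exp (complex_of_real pi * \<i> * (2 * of_nat j - 1) / of_nat (DD d i)))
                 < sqrt s * cmod (a i)"
proof -
  define dm where "dm = real M"
  have dle: "d k \<le> M" if "k \<in> {1..n}" for k
    unfolding M_def using that by (intro Max_ge) auto
  have dge: "1 \<le> d k" if "k \<in> {1..n}" for k using dpos[OF that] by simp
  have dm1: "dm \<ge> 1" using dle[of 1] dge[of 1] n unfolding dm_def by auto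
  have K1: "K \<ge> 1" unfolding K_def by (rule one_le_power) simp
  have Kdef: "K = (2 * dm + 2) ^ (2 * M)" unfolding K_def dm_def ..
  have Cdef: "C = 8 * real n * dm ^ 4 * K ^ 2" unfolding C_def dm_def ..
  have dm4: "dm \<le> dm ^ 4" using dm1 by (simp add: power_increasing[of 1 4 dm, simplified])
  have KK: "K \<le> K ^ 2" using K1 by (simp add: power2_eq_square)
  have d34: "dm ^ 3 \<le> dm ^ 4" using dm1 by (intro power_increasing) auto
  have n1: "real n \<ge> 1" using n by simp
  have "2 * dm ^ 3 * K \<le> 2 * dm ^ 4 * K ^ 2"
    using KK d34 K1 dm1 by (intro mult_mono) auto
  also have "\<dots> \<le> 8 * real n * dm ^ 4 * K ^ 2"
    using n1 dm1 K1 by (intro mult_right_mono) auto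
  finally have C1: "C \<ge> 2 * dm ^ 3 * K" unfolding Cdef .
  have "1 \<le> 2 * dm ^ 3 * K" using dm1 K1
    by (metis mult_mono' one_le_power mult.right_neutral mult_numeral_1 le_numeral_extra(4) one_le_numeral order_trans zero_le_one)
  then have C1': "C \<ge> 1" using C1 by linarith
  define t where "t = sqrt s"
  have t0: "0 < t" using s unfolding t_def by simp
  have st: "s = t^2" using s unfolding t_def by simp
  have x0: "12 * dm * C > 0" using dm1 C1' by simp
  have "t < sqrt ((1 / (12 * dm * C))^2)" unfolding t_def using s(2) by (intro real_sqrt_less_mono) (simp add: dm_def power_divide)
  also have "\<dots> = 1 / (12 * dm * C)" using x0 by (simp add: real_sqrt_abs)
  finally have "t < 1 / (12 * dm * C)" .
  then have tC: "12 * dm * C * t < 1" using x0 by (simp add: field_simps)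
  have "1 \<le> dm * C" using dm1 C1' by (metis mult_mono' mult_1 zero_le_one)
  then have dmC: "12 \<le> 12 * dm * C" by simp
  have "12 * t \<le> (12 * dm * C) * t" by (rule mult_right_mono[OF dmC]) (use t0 in auto)
  then have t1: "t < 1/12" using tC by linarith
  have "t * t \<le> t * 1" using t1 t0 by (intro mult_left_mono) auto
  then have s1: "s < 1" using t1 st by (simp add: power2_eq_square)
  have "12 * (C * t) \<le> (12 * dm) * (C * t)" using dm1 C1' t0 by (intro mult_right_mono) auto
  moreover have "12 * dm * C * t = (12 * dm) * (C * t)" by (simp add: ac_simps)
  ultimately have Ct: "C * t < 1/12" using tC by linarith
  have "(C * t) * t \<le> (1/12) * t" using Ct t0 by (intro mult_right_mono) auto
  then have Cs0: "C * s \<le> t / 12" unfolding st power2_eq_square by (simp add: ac_simps)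
  have Cs: "C * s < 1/2" using Cs0 t1 by linarith
  have "(2 * dm ^ 3 * K) * s \<le> C * s" using C1 s by (intro mult_right_mono) auto
  then have Ks: "dm ^ 3 * K * s \<le> 1/2" using Cs by linarith
  have "4 * dm * (C * s) = (4 * dm * C * t) * t" unfolding st power2_eq_square by (simp add: ac_simps)
  also have "\<dots> \<le> (1/3) * t" using tC t0 by (intro mult_right_mono) auto
  finally have key: "4 * dm * (C * s) \<le> t / 2" using t0 by linarith
  have "(dm * t) * 12 \<le> (dm * t) * (12 * C)" using dm1 C1' t0 by (intro mult_left_mono) auto
  moreover have "12 * dm * C * t = (dm * t) * (12 * C)" by (simp add: ac_simps)
  ultimately have "dm * t \<le> 1/12" using tC by linarith
  then have tdm: "t / 2 \<le> 1 / (2 * dm)" using dm1 by (simp add: field_simps)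
  have X: "real (Max (d ` {1..n}))^2 > 0" using dm1 unfolding dm_def M_def by simp
  have n1': "n \<ge> 1" using n by simp
  note mods = moduli[OF s(1) s1 dpos X h1 h2 n1']
  have apos: "cmod (a k) > 0" if "k \<in> {1..n}" for k using mods(1) that by blast
  have adec: "cmod (a m) \<le> cmod (a l)" if "1 \<le> l" "l \<le> m" "m \<le> n" for l m using mods(2) that by blast
  have astep: "cmod (a m) \<le> s powr (1 / real (d (Suc k))) * cmod (a k)" if "1 \<le> k" "k < m" "m \<le> n" for k m
    using mods(3) that by blast
  have a1: "cmod (a 1) ^ d 1 = dm ^ 2 * s" using mods(4) unfolding dm_def M_def by simp
  have i1: "1 \<le> i" "i \<le> n - 1" "Suc i \<le> n" using i n by auto
  define D where "D = DD d i"
  have DDle: "DD d k \<le> 2 * M" "1 \<le> DD d k" if "k \<in> {1..n-1}" for k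
  proof -
    have "k \<in> {1..n}" "Suc k \<in> {1..n}" using that n by auto
    then have "d k \<le> M" "d (Suc k) \<le> M" "1 \<le> d k" using dle dge by auto
    then show "DD d k \<le> 2 * M" "1 \<le> DD d k" unfolding DD_def by auto
  qed
  have D1: "1 \<le> D" "D \<le> 2 * M" using DDle i unfolding D_def by auto
  define \<rho> :: real where "\<rho> = real (d (Suc i)) / real (d i)"
  have di: "1 \<le> d i" "d i \<le> M" using dge dle i1 by auto
  have di': "1 \<le> d (Suc i)" "d (Suc i) \<le> M" using dge dle i1 by auto
  have rho_le: "\<rho> \<le> dm"
  proof -
    have "\<rho> \<le> real (d (Suc i)) / 1" unfolding \<rho>_def using di by (intro divide_left_mono) auto
    then show ?thesis using di' unfolding dm_def by simp
  qed
  have rho_ge: "1 / dm \<le> \<rho>"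
  proof -
    have "1 / dm \<le> 1 / real (d i)" using di dm1 unfolding dm_def by (intro divide_left_mono) auto
    also have "\<dots> \<le> \<rho>" unfolding \<rho>_def using di' di by (intro divide_right_mono) auto
    finally show ?thesis .
  qed
  have rho0: "\<rho> > 0" using rho_ge dm1 by (smt (verit) divide_pos_pos)
  define r where "r = \<rho> powr (1 / real D)"
  have e01: "0 < 1 / real D" "1 / real D \<le> 1" using D1 by auto
  have r_bounds: "1 / dm \<le> r \<and> r \<le> dm"
  proof (cases "\<rho> \<ge> 1")
    case True
    have "1 \<le> r" unfolding r_def using True e01 by (intro ge_one_powr_ge_zero) auto
    moreover have "r \<le> \<rho> powr 1" unfolding r_def using True e01 by (intro powr_mono) auto
    moreover have "1 / dm \<le> 1" using dm1 by simp
    moreover have "\<rho> powr 1 = \<rho>" using rho0 by simp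
    ultimately show ?thesis using rho_le rho0 by linarith
  next
    case False
    have "r \<le> 1" unfolding r_def using False e01 rho0 by (intro powr_le1) auto
    moreover have "\<rho> powr 1 \<le> r" unfolding r_def using False e01 rho0 by (intro powr_mono') auto
    moreover have "\<rho> powr 1 = \<rho>" using rho0 by simp
    ultimately show ?thesis using rho_ge rho0 dm1 by linarith
  qed
  have r0: "r > 0" unfolding r_def using rho0 by simp
  have rD: "r ^ D = \<rho>"
    unfolding r_def using rho0 D1 by (simp add: powr_realpow[symmetric] powr_powr)
  define \<omega> where "\<omega> = exp (complex_of_real pi * \<i> * (2 * of_nat j - 1) / of_nat (DD d i))"
  have j1: "1 \<le> j" using j by simp
  have warg: "complex_of_real pi * \<i> * (2 * of_nat j - 1) / of_nat (DD d i) = \<i> * complex_of_real (pi * (2 * real j - 1) / real D)"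
    unfolding D_def by simp
  have w1: "cmod \<omega> = 1" unfolding \<omega>_def warg by simp
  have wD: "\<omega> ^ D = -1"
  proof -
    have "\<omega> ^ D = exp (of_nat D * (complex_of_real pi * \<i> * (2 * of_nat j - 1) / of_nat (DD d i)))"
      unfolding \<omega>_def by (rule exp_of_nat_mult[symmetric])
    also have "of_nat D * (complex_of_real pi * \<i> * (2 * of_nat j - 1) / of_nat (DD d i)) = of_nat (2 * j - 1) * (complex_of_real pi * \<i>)"
      using D1 j1 unfolding D_def by (simp add: of_nat_diff)
    also have "exp \<dots> = (-1) ^ (2 * j - 1)" by (simp add: exp_of_nat_mult)
    also have "\<dots> = -1" using j1 by (simp add: power_minus_odd)
    finally show ?thesis .
  qed
  define \<zeta>j where "\<zeta>j = complex_of_real r * \<omega>"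
  have zj_norm: "cmod \<zeta>j = r" unfolding \<zeta>j_def using w1 r0 by (simp add: norm_mult)
  have zjD: "\<zeta>j ^ D = - complex_of_real \<rho>"
    unfolding \<zeta>j_def by (simp add: power_mult_distrib wD rD[symmetric])
  define S where "S = {1..n-1}"
  have finS: "finite S" and iS: "i \<in> S" unfolding S_def using i by auto
  define tm where "tm k z = (-1)^(k-1) * of_nat (DD d k) * z ^ DD d k / (z ^ DD d k - a k ^ DD d k)" for k z
  define g where "g k z = tm k z - (if k < i then 0 else (-1)^(k-1) * of_nat (DD d k))" for k z
  define cc :: complex where "cc = of_nat (d 1) - 1"
  define f1 where "f1 z = cc * of_nat (d 1) * z ^ d 1 / (cc * z ^ d 1 + 1)" for z
  define R where "R z = (\<Sum>k\<in>S-{i}. g k z) - f1 z" for z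
  have ident: "crit_lhs n d a z = tm i z + (-1)^i * of_nat (d (Suc i)) + R z" for z
  proof -
    have e1: "crit_lhs n d a z = (\<Sum>k\<in>S. tm k z) + (-1)^(n-1) * of_nat (d n) - f1 z"
      unfolding crit_lhs_def tm_def f1_def cc_def S_def by simp
    have e2: "(\<Sum>k\<in>S. tm k z) = tm i z + (\<Sum>k\<in>S-{i}. tm k z)" by (rule sum.remove[OF finS iS])
    have e3: "(\<Sum>k\<in>S-{i}. tm k z) = (\<Sum>k\<in>S-{i}. g k z) + (\<Sum>k\<in>S-{i}. (if k < i then 0 else (-1)^(k-1) * of_nat (DD d k)))"
      unfolding g_def sum.distrib[symmetric] by simp
    have "(\<Sum>k\<in>S-{i}. (if k < i then 0 else (-1::complex)^(k-1) * of_nat (DD d k)))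
        = (\<Sum>k\<in>S-{i}. (if \<not> k < i then (-1::complex)^(k-1) * of_nat (DD d k) else 0))"
      by (rule sum.cong) auto
    also have "\<dots> = (\<Sum>k\<in>{k\<in>S-{i}. \<not> k < i}. (-1::complex)^(k-1) * of_nat (DD d k))"
      using finS by (intro sum.inter_filter[symmetric]) auto
    also have "{k\<in>S-{i}. \<not> k < i} = {Suc i..n-1}" unfolding S_def using i1 by auto
    also have "(\<Sum>k\<in>{Suc i..n-1}. (-1::complex)^(k-1) * of_nat (DD d k)) = (-1)^i * of_nat (d (Suc i)) - (-1)^(n-1) * of_nat (d (Suc (n-1)))"
      by (rule telescope) (use i1 in auto)
    also have "Suc (n-1) = n" using n by simp
    finally have e4: "(\<Sum>k\<in>S-{i}. (if k < i then 0 else (-1::complex)^(k-1) * of_nat (DD d k))) = (-1)^i * of_nat (d (Suc i)) - (-1)^(n-1) * of_nat (d n)" .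
    show ?thesis unfolding e1 e2 e3 e4 R_def by (simp add: algebra_simps)
  qed
  have Kp: "B ^ p \<le> K" if "1 \<le> B" "B \<le> 2*dm+2" "p \<le> 2*M" for B p
  proof -
    have "B ^ p \<le> (2*dm+2) ^ p" using that by (intro power_mono) auto
    also have "\<dots> \<le> (2*dm+2) ^ (2*M)" using that dm1 by (intro power_increasing) auto
    finally show ?thesis unfolding Kdef .
  qed
  have Ks1: "K * s \<le> 1/2"
  proof -
    have "1 * (K * s) \<le> dm ^ 3 * (K * s)" using dm1 K1 s by (intro mult_right_mono) auto
    then show ?thesis using Ks by (simp add: ac_simps)
  qed
  have zb: "(\<forall>k\<in>S-{i}. z ^ DD d k \<noteq> a k ^ DD d k \<and> cmod (g k z) \<le> 4 * dm * K * s) \<and> cc * z ^ d 1 + 1 \<noteq> 0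
      \<and> cmod (f1 z) \<le> 2 * dm ^ 4 * K * s \<and> cmod (R z) \<le> 4 * real n * dm ^ 4 * K * s"
    if zl: "cmod (a i) / (2*dm) \<le> cmod z" and zu: "cmod z \<le> (dm+1) * cmod (a i)" for z
  proof -
    have ai0: "cmod (a i) > 0" using apos i1 by auto
    have "cmod (a i) / (2*dm) > 0" using ai0 dm1 by simp
    then have z0: "cmod z > 0" using zl by linarith
    have gb: "z ^ DD d k \<noteq> a k ^ DD d k \<and> cmod (g k z) \<le> 4 * dm * K * s" if k: "k \<in> S-{i}" for k
    proof -
      have kS: "1 \<le> k" "k \<le> n - 1" "k \<noteq> i" using k unfolding S_def by auto
      have ak0: "cmod (a k) > 0" using apos kS n by auto
      define Dk where "Dk = DD d k"
      have Dk: "1 \<le> Dk" "Dk \<le> 2 * M" using DDle kS unfolding Dk_def by auto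
      have Dkd: "d (Suc k) \<le> Dk" "d k \<le> Dk" unfolding Dk_def DD_def by auto
      have dk1: "0 < d (Suc k)" "0 < d k" using dpos kS n by auto
      have aD0: "a k ^ Dk \<noteq> 0" using ak0 by auto
      have zD0: "z ^ Dk \<noteq> 0" using z0 by auto
      have sg1: "cmod ((-1::complex)^(k-1)) = 1" by (simp add: norm_power)
      have main: "z ^ Dk \<noteq> a k ^ Dk \<and> cmod (g k z) \<le> real Dk * (2 * (K * s))"
      proof (cases "k < i")
        case True
        define u where "u = z ^ Dk / a k ^ Dk"
        have "cmod z \<le> (dm+1) * (s powr (1 / real (d (Suc k))) * cmod (a k))"
        proof -
          have "cmod (a i) \<le> s powr (1 / real (d (Suc k))) * cmod (a k)" using astep[of k i] kS True i1 by auto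
          then have "(dm+1) * cmod (a i) \<le> (dm+1) * (s powr (1 / real (d (Suc k))) * cmod (a k))"
            using dm1 by (intro mult_left_mono) auto
          then show ?thesis using zu by linarith
        qed
        then have q: "cmod z / cmod (a k) \<le> (dm+1) * s powr (1 / real (d (Suc k)))"
          using ak0 by (simp add: pos_divide_le_eq ac_simps)
        have "cmod u = (cmod z / cmod (a k)) ^ Dk" unfolding u_def by (simp add: norm_divide norm_power power_divide)
        also have "\<dots> \<le> (dm+1) ^ Dk * s"
          by (rule pow_ratio_bound[OF _ q]) (use dm1 dk1 Dkd s s1 z0 ak0 in auto)
        also have "\<dots> \<le> K * s" using Kp[of "dm+1" Dk] Dk dm1 s by (intro mult_right_mono) auto
        finally have uq: "cmod u \<le> K * s" .
        note fb = frac_bound[OF uq Ks1]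
        have ne: "z ^ Dk \<noteq> a k ^ Dk"
        proof
          assume "z ^ Dk = a k ^ Dk" then have "u = 1" unfolding u_def using aD0 by simp
          then show False using fb(1) by simp
        qed
        have "g k z = - ((-1)^(k-1) * of_nat Dk * (u / (1 - u)))"
        proof -
          have "z ^ Dk / (z ^ Dk - a k ^ Dk) = - (u / (1 - u))"
            unfolding u_def using ne aD0 fb(1) by (simp add: field_simps u_def)
          moreover have "tm k z = (-1)^(k-1) * of_nat Dk * (z ^ Dk / (z ^ Dk - a k ^ Dk))" unfolding tm_def Dk_def by simp
          ultimately show ?thesis unfolding g_def using True by simp
        qed
        then have "cmod (g k z) = real Dk * cmod (u / (1 - u))" by (simp only: norm_mult norm_minus_cancel sg1 norm_of_nat mult_1)
        also have "\<dots> \<le> real Dk * (2 * (K * s))" using fb(2) by (intro mult_left_mono) auto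
        finally show ?thesis using ne by simp
      next
        case False
        then have ki: "i < k" using kS by simp
        define v where "v = a k ^ Dk / z ^ Dk"
        have "cmod (a k) = s powr (1 / real (d k)) * cmod (a (k - 1))" using h2 ki kS i1 by auto
        also have "\<dots> \<le> s powr (1 / real (d k)) * cmod (a i)" using adec[of i "k-1"] ki i1 kS
          by (intro mult_left_mono) auto
        also have "\<dots> \<le> s powr (1 / real (d k)) * (2 * dm * cmod z)" using zl dm1
          by (intro mult_left_mono) (auto simp: divide_le_eq ac_simps)
        finally have "cmod (a k) \<le> s powr (1 / real (d k)) * (2 * dm * cmod z)" .
        then have q: "cmod (a k) / cmod z \<le> (2 * dm) * s powr (1 / real (d k))"
          using z0 by (simp add: pos_divide_le_eq ac_simps)
        have "cmod v = (cmod (a k) / cmod z) ^ Dk" unfolding v_def by (simp add: norm_divide norm_power power_divide)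
        also have "\<dots> \<le> (2 * dm) ^ Dk * s"
          by (rule pow_ratio_bound[OF _ q]) (use dm1 dk1 Dkd s s1 z0 ak0 in auto)
        also have "\<dots> \<le> K * s" using Kp[of "2 * dm" Dk] Dk dm1 s by (intro mult_right_mono) auto
        finally have vq: "cmod v \<le> K * s" .
        note fb = frac_bound[OF vq Ks1]
        have ne: "z ^ Dk \<noteq> a k ^ Dk"
        proof
          assume "z ^ Dk = a k ^ Dk" then have "v = 1" unfolding v_def using aD0 by simp
          then show False using fb(1) by simp
        qed
        have "g k z = (-1)^(k-1) * of_nat Dk * (v / (1 - v))"
        proof -
          have "z ^ Dk / (z ^ Dk - a k ^ Dk) - 1 = v / (1 - v)"
            unfolding v_def using ne zD0 fb(1) by (simp add: field_simps v_def)
          moreover have "tm k z = (-1)^(k-1) * of_nat Dk * (z ^ Dk / (z ^ Dk - a k ^ Dk))" unfolding tm_def Dk_def by simp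
          ultimately have "tm k z - (-1)^(k-1) * of_nat Dk = (-1)^(k-1) * of_nat Dk * (v / (1 - v))"
            by (metis right_diff_distrib mult.right_neutral)
          then show ?thesis unfolding g_def Dk_def[symmetric] using False by simp
        qed
        then have "cmod (g k z) = real Dk * cmod (v / (1 - v))" by (simp only: norm_mult norm_minus_cancel sg1 norm_of_nat mult_1)
        also have "\<dots> \<le> real Dk * (2 * (K * s))" using fb(2) by (intro mult_left_mono) auto
        finally show ?thesis using ne by simp
      qed
      have "real Dk * (2 * (K * s)) \<le> (2 * dm) * (2 * (K * s))"
        using Dk K1 s unfolding dm_def by (intro mult_right_mono) auto
      then show ?thesis using main unfolding Dk_def by (simp add: ac_simps)
    qed
    have fb: "cc * z ^ d 1 + 1 \<noteq> 0 \<and> cmod (f1 z) \<le> 2 * dm ^ 4 * K * s"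
    proof -
      have d1: "1 \<le> d 1" "d 1 \<le> M" using dge dle n by auto
      have ccn: "cmod cc \<le> dm"
      proof -
        have "cc = of_nat (d 1 - 1)" unfolding cc_def using d1 by (simp add: of_nat_diff)
        then have "cmod cc = real (d 1 - 1)" by simp
        then show ?thesis using d1 unfolding dm_def by simp
      qed
      have "cmod (z ^ d 1) = cmod z ^ d 1" by (simp add: norm_power)
      also have "\<dots> \<le> ((dm+1) * cmod (a i)) ^ d 1" using zu z0 by (intro power_mono) auto
      also have "\<dots> = (dm+1) ^ d 1 * cmod (a i) ^ d 1" by (simp add: power_mult_distrib)
      also have "\<dots> \<le> K * cmod (a 1) ^ d 1"
      proof (intro mult_mono)
        show "(dm+1) ^ d 1 \<le> K" using Kp[of "dm+1" "d 1"] d1 dm1 by auto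
        show "cmod (a i) ^ d 1 \<le> cmod (a 1) ^ d 1" using adec[of 1 i] i1 by (intro power_mono) auto
      qed (use K1 in auto)
      also have "\<dots> = K * (dm ^ 2 * s)" using a1 by simp
      finally have zd: "cmod (z ^ d 1) \<le> K * (dm ^ 2 * s)" .
      define u where "u = - (cc * z ^ d 1)"
      have "cmod u = cmod cc * cmod (z ^ d 1)" unfolding u_def by (simp add: norm_mult)
      also have "\<dots> \<le> dm * (K * (dm ^ 2 * s))" using ccn zd dm1 by (intro mult_mono) auto
      also have "\<dots> = dm ^ 3 * K * s" by (simp add: power3_eq_cube power2_eq_square ac_simps)
      finally have uq: "cmod u \<le> dm ^ 3 * K * s" .
      note fr = frac_bound[OF uq Ks]
      have ne: "cc * z ^ d 1 + 1 \<noteq> 0" using fr(1) unfolding u_def by (simp add: add.commute)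
      have "f1 z = of_nat (d 1) * (- (u / (1 - u)))"
        unfolding f1_def u_def using ne by (simp add: field_simps add.commute)
      then have "cmod (f1 z) = real (d 1) * cmod (u / (1 - u))" by (simp only: norm_mult norm_minus_cancel norm_of_nat)
      also have "\<dots> \<le> dm * (2 * (dm ^ 3 * K * s))" using fr(2) d1 unfolding dm_def by (intro mult_mono) auto
      also have "\<dots> = 2 * dm ^ 4 * K * s" by (simp add: power_numeral_reduce ac_simps)
      finally show ?thesis using ne by simp
    qed
    have "cmod (R z) \<le> cmod (\<Sum>k\<in>S-{i}. g k z) + cmod (f1 z)"
      unfolding R_def by (rule norm_triangle_ineq4)
    also have "\<dots> \<le> (\<Sum>k\<in>S-{i}. cmod (g k z)) + cmod (f1 z)"
      by (intro add_right_mono norm_sum)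
    also have "\<dots> \<le> (\<Sum>k\<in>S-{i}. 4 * dm * K * s) + 2 * dm ^ 4 * K * s"
      using gb fb by (intro add_mono sum_mono) auto
    also have "\<dots> \<le> 4 * real n * dm ^ 4 * K * s"
    proof -
      have c: "real (card (S-{i})) \<le> real n - 1" unfolding S_def using i1 n by auto
      have p: "0 \<le> 4 * dm * K * s" using dm1 K1 s by simp
      have "(\<Sum>k\<in>S-{i}. 4 * dm * K * s) = real (card (S-{i})) * (4 * dm * K * s)" by simp
      also have "\<dots> \<le> (real n - 1) * (4 * dm * K * s)" using c p by (intro mult_right_mono) auto
      also have "\<dots> \<le> (real n - 1) * (4 * dm ^ 4 * K * s)" using dm4 n K1 s by (intro mult_left_mono mult_right_mono) auto
      finally have A: "(\<Sum>k\<in>S-{i}. 4 * dm * K * s) \<le> (real n - 1) * (4 * dm ^ 4 * K * s)" .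
      have X0: "0 \<le> dm ^ 4 * K * s" using dm1 K1 s by simp
      have "(real n - 1) * (4 * dm ^ 4 * K * s) + 2 * dm ^ 4 * K * s = 4 * real n * (dm ^ 4 * K * s) - 2 * (dm ^ 4 * K * s)"
        by (simp add: algebra_simps)
      then show ?thesis using A X0 by (simp add: ac_simps)
    qed
    finally show ?thesis using gb fb by blast
  qed
  define \<delta> where "\<delta> = t / 2"
  have \<delta>0: "\<delta> > 0" unfolding \<delta>_def using t0 by simp
  have ball_mod: "1 / (2 * dm) \<le> cmod \<zeta> \<and> cmod \<zeta> \<le> dm + 1" if "\<zeta> \<in> cball \<zeta>j \<delta>" for \<zeta>
  proof -
    have dz: "cmod (\<zeta>j - \<zeta>) \<le> \<delta>" using that by (simp add: dist_norm)
    have "cmod \<zeta>j - cmod (\<zeta>j - \<zeta>) \<le> cmod \<zeta>" using norm_triangle_ineq2[of \<zeta>j \<zeta>] by simp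
    moreover have "cmod \<zeta> \<le> cmod \<zeta>j + cmod (\<zeta>j - \<zeta>)" using norm_triangle_ineq4[of \<zeta>j "\<zeta>j - \<zeta>"] by simp
    moreover have "1 / (2 * dm) = 1 / dm - 1 / (2 * dm)" using dm1 by (simp add: field_simps)
    moreover have "1 / (2 * dm) \<le> 1" using dm1 by simp
    ultimately show ?thesis using dz zj_norm r_bounds tdm unfolding \<delta>_def by linarith
  qed
  have zin: "cmod (a i) / (2 * dm) \<le> cmod (a i * \<zeta>) \<and> cmod (a i * \<zeta>) \<le> (dm + 1) * cmod (a i)"
    if "\<zeta> \<in> cball \<zeta>j \<delta>" for \<zeta>
  proof -
    have ai0: "cmod (a i) > 0" using apos i1 by auto
    have "cmod (a i) * (1 / (2 * dm)) \<le> cmod (a i) * cmod \<zeta>" "cmod (a i) * cmod \<zeta> \<le> cmod (a i) * (dm + 1)"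
      using ball_mod[OF that] ai0 by (intro mult_left_mono; simp)+
    then show ?thesis by (simp add: norm_mult ac_simps)
  qed
  define h where "h \<zeta> = (-1)^(i+1) * (\<zeta> ^ D - 1) * R (a i * \<zeta>) / of_nat (d (Suc i))" for \<zeta>
  have hb: "cmod (h \<zeta>) \<le> C * s" if "\<zeta> \<in> cball \<zeta>j \<delta>" for \<zeta>
  proof -
    have "cmod (\<zeta> ^ D - 1) \<le> cmod \<zeta> ^ D + 1" using norm_triangle_ineq4[of "\<zeta> ^ D" 1] by (simp add: norm_power)
    also have "\<dots> \<le> (dm + 1) ^ D + 1" using ball_mod[OF that] by (simp add: power_mono)
    also have "\<dots> \<le> 2 * K" using Kp[of "dm+1" D] D1 dm1 K1 by auto
    finally have p1: "cmod (\<zeta> ^ D - 1) \<le> 2 * K" .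
    have p2: "cmod (R (a i * \<zeta>)) \<le> 4 * real n * dm ^ 4 * K * s" using zb zin[OF that] by blast
    have "cmod (h \<zeta>) = cmod (\<zeta> ^ D - 1) * cmod (R (a i * \<zeta>)) / real (d (Suc i))"
      unfolding h_def by (simp add: norm_mult norm_divide norm_power)
    also have "\<dots> \<le> cmod (\<zeta> ^ D - 1) * cmod (R (a i * \<zeta>)) / 1" using di'
      by (intro divide_left_mono) auto
    also have "\<dots> = cmod (\<zeta> ^ D - 1) * cmod (R (a i * \<zeta>))" by simp
    also have "\<dots> \<le> (2 * K) * (4 * real n * dm ^ 4 * K * s)" using p1 p2 K1 by (intro mult_mono) auto
    also have "\<dots> = C * s" unfolding Cdef by (simp add: power2_eq_square ac_simps)
    finally show ?thesis .
  qed
  define T where "T \<zeta> = \<zeta>j * exp (Ln (1 + h \<zeta>) / of_nat D)" for \<zeta>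
  have hhalf: "cmod (h \<zeta>) < 1/2" if "\<zeta> \<in> cball \<zeta>j \<delta>" for \<zeta> using hb[OF that] Cs by linarith
  have contR: "continuous_on (cball \<zeta>j \<delta>) (\<lambda>\<zeta>. R (a i * \<zeta>))"
  proof -
    have nz1: "\<forall>\<zeta>\<in>cball \<zeta>j \<delta>. \<forall>k\<in>S-{i}. (a i * \<zeta>) ^ DD d k - a k ^ DD d k \<noteq> 0"
      using zb zin by fastforce
    have nz2: "\<forall>\<zeta>\<in>cball \<zeta>j \<delta>. cc * (a i * \<zeta>) ^ d 1 + 1 \<noteq> 0"
      using zb zin by fastforce
    show ?thesis unfolding R_def g_def tm_def f1_def
      using nz1 nz2 by (auto intro!: continuous_intros)
  qed
  have contT: "continuous_on (cball \<zeta>j \<delta>) T"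
  proof -
    have contH: "continuous_on (cball \<zeta>j \<delta>) h" unfolding h_def
      using di' by (auto intro!: continuous_intros contR)
    have notin: "1 + h \<zeta> \<notin> \<real>\<^sub>\<le>\<^sub>0" if "\<zeta> \<in> cball \<zeta>j \<delta>" for \<zeta>
    proof -
      have "\<bar>Re (h \<zeta>)\<bar> \<le> cmod (h \<zeta>)" by (rule abs_Re_le_cmod)
      then have "Re (1 + h \<zeta>) > 0" using hhalf[OF that] by simp
      then show ?thesis by (simp add: complex_nonpos_Reals_iff)
    qed
    have c1: "continuous_on (cball \<zeta>j \<delta>) (\<lambda>\<zeta>. 1 + h \<zeta>)" by (intro continuous_intros contH)
    have c2: "continuous_on ((\<lambda>\<zeta>. 1 + h \<zeta>) ` cball \<zeta>j \<delta>) Ln" by (rule continuous_on_Ln) (use notin in auto)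
    have c3: "continuous_on (cball \<zeta>j \<delta>) (\<lambda>\<zeta>. Ln (1 + h \<zeta>))" using continuous_on_compose[OF c1 c2] by (simp add: o_def)
    have c4: "continuous_on (cball \<zeta>j \<delta>) (\<lambda>\<zeta>. Ln (1 + h \<zeta>) / of_nat D)"
      by (rule continuous_on_divide[OF c3 continuous_on_const]) (use D1 in auto)
    have c5: "continuous_on (cball \<zeta>j \<delta>) (\<lambda>\<zeta>. exp (Ln (1 + h \<zeta>) / of_nat D))"
      by (rule continuous_on_exp[OF c4])
    show ?thesis unfolding T_def by (rule continuous_on_mult[OF continuous_on_const c5])
  qed
  have mapsT: "T \<in> cball \<zeta>j \<delta> \<rightarrow> cball \<zeta>j \<delta>"
  proof
    fix \<zeta> assume z: "\<zeta> \<in> cball \<zeta>j \<delta>"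
    have rb: "cmod (exp (Ln (1 + h \<zeta>) / of_nat D) - 1) \<le> 4 * cmod (h \<zeta>)"
      using root_bound(1)[OF hhalf[OF z] D1(1)] .
    have "dist \<zeta>j (T \<zeta>) = cmod (\<zeta>j * (exp (Ln (1 + h \<zeta>) / of_nat D) - 1))"
      unfolding T_def dist_norm by (simp add: algebra_simps norm_minus_commute)
    also have "\<dots> = r * cmod (exp (Ln (1 + h \<zeta>) / of_nat D) - 1)" by (simp add: norm_mult zj_norm)
    also have "\<dots> \<le> dm * (4 * (C * s))" using r_bounds r0 rb hb[OF z] by (intro mult_mono) auto
    also have "\<dots> \<le> \<delta>" using key unfolding \<delta>_def by (simp add: ac_simps)
    finally show "T \<zeta> \<in> cball \<zeta>j \<delta>" by simp
  qed
  obtain \<zeta>0 where z0: "\<zeta>0 \<in> cball \<zeta>j \<delta>" and fix0: "T \<zeta>0 = \<zeta>0"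
    using brouwer_ball[OF \<delta>0 contT mapsT] by blast
  define w where "w = a i * \<zeta>0"
  define u where "u = \<zeta>0 ^ D"
  define Rw where "Rw = R w"
  define \<sigma> :: complex where "\<sigma> = (-1)^(i-1)"
  have ai0: "cmod (a i) > 0" using apos i1 by auto
  have aiD: "a i ^ D \<noteq> 0" using ai0 by auto
  have hh: "cmod (h \<zeta>0) < 1/2" using hhalf[OF z0] .
  have uu: "u = - complex_of_real \<rho> * (1 + h \<zeta>0)"
  proof -
    have "u = (\<zeta>j * exp (Ln (1 + h \<zeta>0) / of_nat D)) ^ D" unfolding u_def using fix0 unfolding T_def by simp
    also have "\<dots> = \<zeta>j ^ D * (1 + h \<zeta>0)" by (simp add: power_mult_distrib root_bound(2)[OF hh D1(1)])
    finally show ?thesis using zjD by simp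
  qed
  have u1: "u \<noteq> 1"
  proof
    assume "u = 1"
    then have "Re (- complex_of_real \<rho> * (1 + h \<zeta>0)) = 1" using uu by simp
    then have "- \<rho> * (1 + Re (h \<zeta>0)) = 1" by simp
    moreover have "\<bar>Re (h \<zeta>0)\<bar> \<le> cmod (h \<zeta>0)" by (rule abs_Re_le_cmod)
    ultimately have "1 + Re (h \<zeta>0) > 0" using hh by linarith
    then have "\<rho> * (1 + Re (h \<zeta>0)) > 0" using rho0 by simp
    then show False using \<open>- \<rho> * (1 + Re (h \<zeta>0)) = 1\<close> by linarith
  qed
  have wD: "w ^ D = a i ^ D * u" unfolding w_def u_def by (simp add: power_mult_distrib)
  have zm: "cmod (a i) / (2 * dm) \<le> cmod w \<and> cmod w \<le> (dm + 1) * cmod (a i)" using zin[OF z0] unfolding w_def .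
  note zbw = zb[OF conjunct1[OF zm] conjunct2[OF zm]]
  have "cmod (a i) / (2 * dm) > 0" using ai0 dm1 by simp
  then have w0: "w \<noteq> 0" using zm by auto
  have wk: "\<forall>k\<in>{1..n-1}. w ^ DD d k \<noteq> a k ^ DD d k"
  proof
    fix k assume k: "k \<in> {1..n-1}"
    show "w ^ DD d k \<noteq> a k ^ DD d k"
    proof (cases "k = i")
      case True
      then show ?thesis using wD u1 aiD unfolding D_def by auto
    next
      case False then show ?thesis using zbw k unfolding S_def by blast
    qed
  qed
  have wc: "(of_nat (d 1) - 1) * w ^ d 1 + 1 \<noteq> 0" using zbw unfolding cc_def by blast
  have crit0: "crit_lhs n d a w = 0"
  proof -
    have di0: "of_nat (d i) \<noteq> (0::complex)" "of_nat (d (Suc i)) \<noteq> (0::complex)" using di di' by auto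
    have tmi: "tm i w = \<sigma> * of_nat D * (u / (u - 1))"
    proof -
      have "w ^ D / (w ^ D - a i ^ D) = u / (u - 1)" unfolding wD using aiD u1
        by (simp add: field_simps)
      moreover have "tm i w = \<sigma> * of_nat D * (w ^ D / (w ^ D - a i ^ D))" unfolding tm_def \<sigma>_def D_def by simp
      ultimately show ?thesis by simp
    qed
    have hdef: "h \<zeta>0 * of_nat (d (Suc i)) = \<sigma> * (u - 1) * Rw"
      unfolding h_def \<sigma>_def u_def Rw_def w_def using di0 i1
      by (simp add: power_eq_if[of "-1::complex" i] field_simps)
    have rho_c: "complex_of_real \<rho> * of_nat (d i) = of_nat (d (Suc i))"
      unfolding \<rho>_def using di0 by (simp add: field_simps)
    have hu: "of_nat (d i) * u = - of_nat (d (Suc i)) - \<sigma> * (u - 1) * Rw"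
    proof -
      have "of_nat (d i) * u = - (complex_of_real \<rho> * of_nat (d i)) * (1 + h \<zeta>0)" unfolding uu by (simp add: ac_simps)
      also have "\<dots> = - of_nat (d (Suc i)) - h \<zeta>0 * of_nat (d (Suc i))" unfolding rho_c by (simp add: algebra_simps)
      finally show ?thesis unfolding hdef .
    qed
    have ss: "\<sigma> * \<sigma> = 1" unfolding \<sigma>_def by (simp flip: power_add)
    have sgn: "(-1::complex) ^ i = - \<sigma>" unfolding \<sigma>_def using i1 by (simp add: power_eq_if[of "-1::complex" i])
    have Dsum: "(of_nat D :: complex) = of_nat (d i) + of_nat (d (Suc i))" unfolding D_def DD_def by simp
    have num: "\<sigma> * of_nat D * u - \<sigma> * of_nat (d (Suc i)) * (u - 1) + Rw * (u - 1) = 0"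
      unfolding Dsum using hu ss by algebra
    have um: "u - 1 \<noteq> 0" using u1 by simp
    have "crit_lhs n d a w = \<sigma> * of_nat D * (u / (u - 1)) - \<sigma> * of_nat (d (Suc i)) + Rw"
      unfolding ident tmi sgn Rw_def by simp
    also have "\<dots> = (\<sigma> * of_nat D * u - \<sigma> * of_nat (d (Suc i)) * (u - 1) + Rw * (u - 1)) / (u - 1)"
      using um by (simp add: field_simps)
    also have "\<dots> = 0" unfolding num by simp
    finally show ?thesis .
  qed
  have dist: "cmod (w - complex_of_real ((real (d (Suc i)) / real (d i)) powr (1 / real (DD d i)))
                          * a i * exp (complex_of_real pi * \<i> * (2 * of_nat j - 1) / of_nat (DD d i)))
                 < sqrt s * cmod (a i)"
  proof -
    have "w - complex_of_real ((real (d (Suc i)) / real (d i)) powr (1 / real (DD d i)))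
                          * a i * exp (complex_of_real pi * \<i> * (2 * of_nat j - 1) / of_nat (DD d i))
          = a i * (\<zeta>0 - \<zeta>j)"
      unfolding w_def \<zeta>j_def \<omega>_def r_def \<rho>_def D_def by (simp add: algebra_simps)
    moreover have "cmod (\<zeta>0 - \<zeta>j) \<le> \<delta>" using z0 by (simp add: dist_norm norm_minus_commute)
    moreover have "\<delta> < t" unfolding \<delta>_def using t0 by simp
    ultimately have "cmod (w - complex_of_real ((real (d (Suc i)) / real (d i)) powr (1 / real (DD d i)))
                          * a i * exp (complex_of_real pi * \<i> * (2 * of_nat j - 1) / of_nat (DD d i))) < cmod (a i) * t"
      using ai0 by (simp add: norm_mult)
    then show ?thesis unfolding t_def by (simp add: ac_simps)
  qed
  show ?thesis using w0 wk wc crit0 dist by blast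
qed



theorem lemma2p8:
  fixes n :: nat and d :: "nat \<Rightarrow> nat"
  assumes "n \<ge> 2"
    and "\<And>i. i \<in> {1..n} \<Longrightarrow> d i > 0"
    and "(\<Sum>i=1..n. 1 / real (d i)) < 1"
  shows "\<exists>s0>0. \<forall>s a. 0 < s \<and> s < s0
           \<and> cmod (a 1) = (real (Max (d ` {1..n}))^2 * s) powr (1 / real (d 1))
           \<and> (\<forall>i\<in>{2..n}. cmod (a i) = s powr (1 / real (d i)) * cmod (a (i - 1)))
         \<longrightarrow> (\<forall>i\<in>{1..n-1}. \<forall>j\<in>{1..DD d i}. \<exists>w. w \<noteq> 0
               \<and> (\<forall>k\<in>{1..n-1}. w ^ DD d k \<noteq> a k ^ DD d k)
               \<and> (of_nat (d 1) - 1) * w ^ d 1 + 1 \<noteq> 0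
               \<and> deriv (Pn n d a) w = 0
               \<and> crit_eq n d a w
               \<and> cmod (w - complex_of_real ((real (d (Suc i)) / real (d i)) powr (1 / real (DD d i)))
                          * a i * exp (complex_of_real pi * \<i> * (2 * of_nat j - 1) / of_nat (DD d i)))
                 < sqrt s * cmod (a i))"
proof -
  define M where "M = Max (d ` {1..n})"
  define K :: real where "K = (2 * real M + 2) ^ (2 * M)"
  define C where "C = 8 * real n * real M ^ 4 * K ^ 2"
  define s0 where "s0 = 1 / (12 * real M * C)^2"
  have "d 1 \<le> M" unfolding M_def using assms(1) by (intro Max_ge) auto
  moreover have "d 1 > 0" using assms(1,2) by auto
  ultimately have M1: "real M \<ge> 1" by simp
  have K1: "K \<ge> 1" unfolding K_def by (rule one_le_power) simp
  have "C > 0" unfolding C_def using M1 K1 assms(1) by simp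
  then have s00: "s0 > 0" unfolding s0_def using M1 by simp
  show ?thesis
  proof (intro exI[of _ s0] conjI s00 allI impI ballI)
    fix s :: real and a :: "nat \<Rightarrow> complex" and i j
    assume H: "0 < s \<and> s < s0 \<and> cmod (a 1) = (real (Max (d ` {1..n}))^2 * s) powr (1 / real (d 1))
           \<and> (\<forall>i\<in>{2..n}. cmod (a i) = s powr (1 / real (d i)) * cmod (a (i - 1)))"
      and i: "i \<in> {1..n-1}" and j: "j \<in> {1..DD d i}"
    have "\<exists>w. w \<noteq> 0
               \<and> (\<forall>k\<in>{1..n-1}. w ^ DD d k \<noteq> a k ^ DD d k)
               \<and> (of_nat (d 1) - 1) * w ^ d 1 + 1 \<noteq> 0
               \<and> crit_lhs n d a w = 0
               \<and> cmod (w - complex_of_real ((real (d (Suc i)) / real (d i)) powr (1 / real (DD d i)))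
                          * a i * exp (complex_of_real pi * \<i> * (2 * of_nat j - 1) / of_nat (DD d i)))
                 < sqrt s * cmod (a i)"
      by (rule core[OF assms(1,2)]) (use H i j in \<open>auto simp: s0_def C_def K_def M_def\<close>)
    then obtain w where w: "w \<noteq> 0" "\<forall>k\<in>{1..n-1}. w ^ DD d k \<noteq> a k ^ DD d k"
      "(of_nat (d 1) - 1) * w ^ d 1 + 1 \<noteq> 0" "crit_lhs n d a w = 0"
      "cmod (w - complex_of_real ((real (d (Suc i)) / real (d i)) powr (1 / real (DD d i)))
                          * a i * exp (complex_of_real pi * \<i> * (2 * of_nat j - 1) / of_nat (DD d i)))
                 < sqrt s * cmod (a i)" by blast
    have ce: "crit_eq n d a w" using w(4) unfolding crit_eq_def crit_lhs_def .
    have "deriv (Pn n d a) w = 0" by (rule deriv_Pn[OF assms(2) assms(1) w(1-3) ce])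
    then show "\<exists>w. w \<noteq> 0
               \<and> (\<forall>k\<in>{1..n-1}. w ^ DD d k \<noteq> a k ^ DD d k)
               \<and> (of_nat (d 1) - 1) * w ^ d 1 + 1 \<noteq> 0
               \<and> deriv (Pn n d a) w = 0
               \<and> crit_eq n d a w
               \<and> cmod (w - complex_of_real ((real (d (Suc i)) / real (d i)) powr (1 / real (DD d i)))
                          * a i * exp (complex_of_real pi * \<i> * (2 * of_nat j - 1) / of_nat (DD d i)))
                 < sqrt s * cmod (a i)" using w ce by blast
  qed
qed


end
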